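(* Let $n,t,t'$ be positive integers with $n\ge t+12$ and $\prod_{j=n-t'+1}^{n} j\ge 2(t+2)(2t+1)t^2$, and let $m\ge0$ be an integer. Then there exist a map $\mathcal{E}_r:\mathcal{S}_n\to\mathcal{S}_{n+t'+1}$ and a decoding map $\mathcal{D}$ such that for every $\sigma\in\mathcal{S}_n$ and every sequence $\pi_e$ obtained from $\pi=\mathcal{E}_r(\sigma)$ by a single rank-modulation stuck-at error with parameters $t,m$ (as defined in the context), we have $\mathcal{D}(\pi_e)=\sigma$.
   Context: $\mathcal{S}_N$ denotes the set of permutations $\pi=(\pi(1),\ldots,\pi(N))$ of $[N]=\{1,\ldots,N\}$. Rank-modulation stuck-at error with parameters $t,m$: $\pi_e$ is obtained from $\pi\in\mathcal{S}_N$ if there exist a position $i_1\in[N]$ with $\pi(i_1)>m$ and $t_1\in[t]$ such that $\pi_e(i_1)=\pi(i_1)-t_1$, $\pi_e(i)=\pi(i)-1$ for all $i$ with $\pi(i)>\pi(i_1)$, and $\pi_e(i)=\pi(i)$ for all other $i$. *)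

theory Defs
  imports Main
begin

text \<open>Permutations of [N], represented as lists (pi(1),...,pi(N)) of integers
  (positions are 0-based list indices).\<close>
definition perms :: "nat \<Rightarrow> int list set" where
  "perms N = {xs. length xs = N \<and> distinct xs \<and> set xs = {1..int N}}"

definition stuck_at_error :: "nat \<Rightarrow> int \<Rightarrow> int list \<Rightarrow> int list \<Rightarrow> bool" where
  "stuck_at_error t m p pe \<longleftrightarrow>
     length pe = length p \<and>
     (\<exists>i1 < length p. p ! i1 > m \<and>
        (\<exists>t1 \<in> {1..int t}.
           pe ! i1 = p ! i1 - t1 \<and>
           (\<forall>i < length p. p ! i > p ! i1 \<longrightarrow> pe ! i = p ! i - 1) \<and>
           (\<forall>i < length p. i \<noteq> i1 \<and> \<not> p ! i > p ! i1 \<longrightarrow> pe ! i = p ! i)))"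

end

theory Submission
  imports Defs "HOL-Combinatorics.Multiset_Permutations"
begin

lemma perms_eq: "perms N = permutations_of_set {1..int N}"
  unfolding perms_def permutations_of_set_def
  using distinct_card by fastforce

lemma perms_finite: "finite (perms N)"
  by (simp add: perms_eq)

lemma perms_card: "card (perms N) = fact N"
  by (simp add: perms_eq)

definition ferr :: "int list \<Rightarrow> nat \<Rightarrow> int \<Rightarrow> int list" where
  "ferr p i s = map (\<lambda>k. if k = i then p!i - s else if p!k > p!i then p!k - 1 else p!k) [0..<length p]"

definition grec :: "int list \<Rightarrow> nat \<Rightarrow> int \<Rightarrow> int list" where
  "grec pe j s = map (\<lambda>k. if k = j then pe!j + s else if pe!k \<ge> pe!j + s then pe!k + 1 else pe!k) [0..<length pe]"

definition errAt :: "int list \<Rightarrow> int list \<Rightarrow> nat \<Rightarrow> int \<Rightarrow> bool" where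
  "errAt p pe i s \<longleftrightarrow> length pe = length p \<and> i < length p \<and> pe ! i = p ! i - s \<and>
     (\<forall>k<length p. p ! k > p ! i \<longrightarrow> pe ! k = p ! k - 1) \<and>
     (\<forall>k<length p. k \<noteq> i \<and> \<not> p ! k > p ! i \<longrightarrow> pe ! k = p ! k)"

lemma err_dest:
  assumes "stuck_at_error t m p pe"
  shows "\<exists>i s. s \<in> {1..int t} \<and> errAt p pe i s"
  using assms unfolding stuck_at_error_def errAt_def by blast

lemma errAt_ferr: "errAt p pe i s \<Longrightarrow> pe = ferr p i s"
  unfolding errAt_def by (intro nth_equalityI) (auto simp: ferr_def)

lemma perm_nth: "p \<in> perms N \<Longrightarrow> k < N \<Longrightarrow> p ! k \<in> {1..int N}"
  unfolding perms_def using nth_mem by blast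

lemma perm_len: "p \<in> perms N \<Longrightarrow> length p = N"
  unfolding perms_def by blast

lemma perm_dist: "p \<in> perms N \<Longrightarrow> k < N \<Longrightarrow> l < N \<Longrightarrow> k \<noteq> l \<Longrightarrow> p ! k \<noteq> p ! l"
  unfolding perms_def using nth_eq_iff_index_eq by blast

lemma recon:
  assumes p: "p \<in> perms N" and A: "errAt p pe i s"
  shows "p = grec pe i s"
proof (rule nth_equalityI)
  have L: "length p = N" using perm_len[OF p] .
  show "length p = length (grec pe i s)" using A by (simp add: grec_def errAt_def)
  fix k assume k: "k < length p"
  show "p ! k = grec pe i s ! k"
  proof (cases "k = i")
    case True then show ?thesis using A k by (simp add: grec_def errAt_def)
  next
    case False
    then have "p ! k \<noteq> p ! i" using perm_dist[OF p] k A L by (auto simp: errAt_def)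
    then show ?thesis using A k False by (auto simp: grec_def errAt_def)
  qed
qed

lemma inj_off:
  assumes p: "p \<in> perms N" and A: "errAt p pe i s"
    and "k < N" "l < N" "k \<noteq> i" "l \<noteq> i" "k \<noteq> l"
  shows "pe ! k \<noteq> pe ! l"
proof -
  have iN: "i < N" using A perm_len[OF p] by (simp add: errAt_def)
  have "p ! k \<noteq> p ! l" "p ! k \<noteq> p ! i" "p ! l \<noteq> p ! i"
    using perm_dist[OF p] assms iN by auto
  then show ?thesis using A assms perm_len[OF p] unfolding errAt_def
    by (smt (verit))
qed

lemma range_off:
  assumes p: "p \<in> perms N" and A: "errAt p pe i s" and "k < N" "k \<noteq> i"
  shows "1 \<le> pe ! k"
proof -
  have "p ! k \<noteq> p ! i" using perm_dist[OF p] assms by (auto simp: errAt_def perm_len[OF p])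
  moreover have "p ! k \<in> {1..int N}" "p ! i \<in> {1..int N}"
    using perm_nth[OF p] assms by (auto simp: errAt_def perm_len[OF p])
  ultimately show ?thesis using A assms perm_len[OF p] unfolding errAt_def
    by (smt (verit) atLeastAtMost_iff)
qed

lemma conflict:
  assumes p: "p \<in> perms N" and q: "q \<in> perms N"
    and A: "errAt p pe i s" and B: "errAt q pe j r" and s: "s \<ge> 1"
  shows "j = i \<or> j = (SOME l. l < N \<and> p ! l = p ! i - s)"
proof (rule ccontr)
  assume c: "\<not> ?thesis"
  have LP: "length p = N" "length q = N" using perm_len p q by auto
  have iN: "i < N" "j < N" using A B LP by (auto simp: errAt_def)
  have "1 \<le> pe ! i" using range_off[OF q B iN(1)] c by auto
  then have w: "p ! i - s \<in> {1..int N}" using perm_nth[OF p iN(1)] A s by (auto simp: errAt_def)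
  have "p ! i - s \<in> set p" using w p unfolding perms_def by auto
  then obtain l where l: "l < N" "p ! l = p ! i - s" by (metis LP(1) in_set_conv_nth)
  have uniq: "\<And>l'. l' < N \<and> p ! l' = p ! i - s \<Longrightarrow> l' = l"
    using perm_dist[OF p] l by metis
  have "(SOME l. l < N \<and> p ! l = p ! i - s) = l"
    using l uniq by (metis (mono_tags, lifting) someI)
  with c have lj: "l \<noteq> j" by auto
  have li: "l \<noteq> i" using l s by auto
  have "pe ! l = p ! l" using A l li s LP unfolding errAt_def by auto
  then have "pe ! l = pe ! i" using A l unfolding errAt_def by auto
  moreover have "pe ! l \<noteq> pe ! i" using inj_off[OF q B l(1) iN(1) lj] c li by auto
  ultimately show False by simp
qed

definition confl :: "nat \<Rightarrow> int \<Rightarrow> int list \<Rightarrow> int list \<Rightarrow> bool" where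
  "confl t m p q \<longleftrightarrow> (\<exists>pe. stuck_at_error t m p pe \<and> stuck_at_error t m q pe)"

lemma nbr_bound:
  assumes p: "p \<in> perms N"
  shows "card {q \<in> perms N. confl t m p q} \<le> N * t * 2 * t"
proof -
  define D where "D = {..<N} \<times> {1..int t} \<times> (UNIV::bool set) \<times> {1..int t}"
  define F where "F = (\<lambda>(i,s,b,r). grec (ferr p i s) (if b then i else (SOME l. l < N \<and> p ! l = p ! i - s)) r)"
  have sub: "{q \<in> perms N. confl t m p q} \<subseteq> F ` D"
  proof
    fix q assume "q \<in> {q \<in> perms N. confl t m p q}"
    then have q: "q \<in> perms N" and "confl t m p q" by auto
    then obtain pe where e1: "stuck_at_error t m p pe" and e2: "stuck_at_error t m q pe"
      unfolding confl_def by blast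
    obtain i s where iS: "s \<in> {1..int t}" "errAt p pe i s" using err_dest[OF e1] by blast
    obtain j r where jr: "r \<in> {1..int t}" "errAt q pe j r" using err_dest[OF e2] by blast
    have pe: "pe = ferr p i s" using errAt_ferr[OF iS(2)] .
    have qe: "q = grec pe j r" using recon[OF q jr(2)] .
    have c: "j = i \<or> j = (SOME l. l < N \<and> p ! l = p ! i - s)"
      using conflict[OF p q iS(2) jr(2)] iS(1) by auto
    have iN: "i < N" using iS(2) perm_len[OF p] by (simp add: errAt_def)
    have "q = F (i, s, j = i, r)" using c qe pe unfolding F_def by auto
    moreover have "(i, s, j = i, r) \<in> D" using iN iS jr unfolding D_def by auto
    ultimately show "q \<in> F ` D" by blast
  qed
  have "card D = N * t * 2 * t" unfolding D_def by (simp add: card_cartesian_product)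
  moreover have "finite D" unfolding D_def by simp
  ultimately have "card (F ` D) \<le> N * t * 2 * t" using card_image_le by metis
  moreover have "card {q \<in> perms N. confl t m p q} \<le> card (F ` D)"
    using sub \<open>finite D\<close> by (intro card_mono) auto
  ultimately show ?thesis by linarith
qed

lemma greedy:
  assumes "finite S" "\<And>x y. R x y \<Longrightarrow> R y x" "\<And>x. x \<in> S \<Longrightarrow> card {y\<in>S. R x y} \<le> d"
  shows "\<exists>C\<subseteq>S. (\<forall>x\<in>C. \<forall>y\<in>C. x \<noteq> y \<longrightarrow> \<not> R x y) \<and> card S \<le> Suc d * card C"
  using assms
proof (induction "card S" arbitrary: S rule: less_induct)
  case less
  show ?case
  proof (cases "S = {}")
    case True then show ?thesis by auto
  next
    case False
    then obtain x where x: "x \<in> S" by blast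
    define S' where "S' = S - insert x {y\<in>S. R x y}"
    have fin: "finite S'" using less.prems unfolding S'_def by auto
    have lt: "card S' < card S" unfolding S'_def using x less.prems(1)
      by (intro psubset_card_mono) auto
    have "\<And>z. z \<in> S' \<Longrightarrow> card {y\<in>S'. R z y} \<le> d"
    proof -
      fix z assume "z \<in> S'"
      then have "card {y\<in>S. R z y} \<le> d" using less.prems(3) unfolding S'_def by auto
      moreover have "card {y\<in>S'. R z y} \<le> card {y\<in>S. R z y}"
        using less.prems(1) unfolding S'_def by (intro card_mono) auto
      ultimately show "card {y\<in>S'. R z y} \<le> d" by simp
    qed
    then obtain C' where C': "C' \<subseteq> S'" "\<forall>x\<in>C'. \<forall>y\<in>C'. x \<noteq> y \<longrightarrow> \<not> R x y"
      "card S' \<le> Suc d * card C'"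
      using less.hyps[OF lt fin less.prems(2)] by blast
    define C where "C = insert x C'"
    have xC: "x \<notin> C'" using C' unfolding S'_def by auto
    have finC: "finite C'" using C'(1) fin finite_subset by blast
    have "C \<subseteq> S" using C' x unfolding C_def S'_def by auto
    moreover have "\<forall>a\<in>C. \<forall>b\<in>C. a \<noteq> b \<longrightarrow> \<not> R a b"
      using C' less.prems(2) unfolding C_def S'_def by blast
    moreover have "card S \<le> Suc d * card C"
    proof -
      have "card (insert x {y\<in>S. R x y}) \<le> Suc d"
        using card_insert_le[of "{y\<in>S. R x y}" x] less.prems(3)[OF x] less.prems(1)
        by (simp add: card_insert_if)
      moreover have "card S \<le> card S' + card (insert x {y\<in>S. R x y})"
      proof -
        have "S = S' \<union> (insert x {y\<in>S. R x y})" unfolding S'_def using x by auto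
        then show ?thesis by (metis card_Un_le)
      qed
      ultimately show ?thesis using C'(3) xC finC unfolding C_def by simp
    qed
    ultimately show ?thesis by blast
  qed
qed

lemma factp: "fact (n + k) = (fact n :: nat) * \<Prod>{n+1..n+k}"
proof (induction k)
  case 0 then show ?case by simp
next
  case (Suc k)
  have "\<Prod>{n+1..n+Suc k} = \<Prod>{n+1..n+k} * (n + Suc k)"
    by (simp add: prod.nat_ivl_Suc')
  then show ?case using Suc by (simp add: algebra_simps)
qed

lemma prodshift:
  fixes n t' :: nat
  assumes "t' \<le> n"
  shows "(\<Prod>j\<in>{int n - int t' + 1..int n}. j) \<le> int (\<Prod>{n+1..n+t'})"
proof -
  have "(\<Prod>j\<in>{int n - int t' + 1..int n}. j) \<le> (\<Prod>j\<in>{int n - int t' + 1..int n}. j + int t')"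
    using assms by (intro prod_mono) auto
  also have "\<dots> = (\<Prod>j\<in>(\<lambda>j. j + int t') ` {int n - int t' + 1..int n}. j)"
    by (subst prod.reindex) (auto simp: inj_on_def)
  also have "(\<lambda>j. j + int t') ` {int n - int t' + 1..int n} = int ` {n+1..n+t'}"
  proof -
    have "(\<lambda>j. j + int t') ` {int n - int t' + 1..int n} = {int n + 1..int n + int t'}"
      by (simp add: image_add_atLeastAtMost' algebra_simps)
    also have "\<dots> = int ` {n+1..n+t'}" by (simp add: image_int_atLeastAtMost)
    finally show ?thesis .
  qed
  also have "(\<Prod>j\<in>int ` {n+1..n+t'}. j) = int (\<Prod>{n+1..n+t'})"
    by (subst prod.reindex) (auto simp: of_nat_prod)
  finally show ?thesis .
qed

theorem theorem3:
  fixes n t t' :: nat and m :: int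
  assumes "n > 0" "t > 0" "t' > 0"
    and "n \<ge> t + 12"
    and "(\<Prod>j\<in>{int n - int t' + 1..int n}. j) \<ge> 2 * (int t + 2) * (2 * int t + 1) * (int t)^2"
    and "m \<ge> 0"
  shows "\<exists>(E :: int list \<Rightarrow> int list) (D :: int list \<Rightarrow> int list).
           (\<forall>\<sigma>\<in>perms n. E \<sigma> \<in> perms (n + t' + 1)) \<and>
           (\<forall>\<sigma>\<in>perms n. \<forall>pe. stuck_at_error t m (E \<sigma>) pe \<longrightarrow> D pe = \<sigma>)"
proof -
  define N where "N = n + t' + 1"
  define d where "d = N * t * 2 * t"
  define P where "P = (\<Prod>{n+1..n+t'} :: nat)"
  have pos: "0 < 2 * (int t + 2) * (2 * int t + 1) * (int t)^2" using assms(2) by simp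
  have tn: "t' \<le> n"
  proof (rule ccontr)
    assume "\<not> t' \<le> n"
    then have "(0::int) \<in> {int n - int t' + 1..int n}" by auto
    then have "(\<Prod>j\<in>{int n - int t' + 1..int n}. j) = 0" by (intro prod_zero) auto
    then show False using assms(5) pos by linarith
  qed
  have a9: "(9::int) \<le> (int t + 2) * (2 * int t + 1)"
    using mult_mono[of 3 "int t + 2" 3 "2 * int t + 1"] assms(2) by simp
  have "2 * (int t + 2) * (2 * int t + 1) * (int t)^2 \<ge> 18 * (int t)^2"
    using mult_right_mono[OF a9, of "2 * (int t)^2"] by (simp add: algebra_simps)
  moreover have "18 * (int t)^2 \<ge> 2 * (int t)^2 + 1"
  proof -
    have "(1::int) \<le> (int t)^2" using assms(2) by (simp add: one_le_power)
    then show ?thesis by linarith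
  qed
  ultimately have "int P \<ge> 2 * (int t)^2 + 1"
    using prodshift[OF tn] assms(5) unfolding P_def by linarith
  moreover have "int (2 * t^2 + 1) = 2 * (int t)^2 + 1" by simp
  ultimately have "int (2 * t^2 + 1) \<le> int P" by linarith
  then have P: "P \<ge> 2 * t^2 + 1" by (simp only: of_nat_le_iff)
  have fN: "fact N = N * (fact n * P)"
    using factp[of n t'] unfolding N_def P_def by simp
  have "Suc d \<le> N * P"
  proof -
    have "Suc d \<le> N * (2 * t^2 + 1)" unfolding d_def N_def by (simp add: power2_eq_square algebra_simps)
    also have "\<dots> \<le> N * P" using P by (rule mult_le_mono2)
    finally show ?thesis .
  qed
  then have "Suc d * fact n \<le> (N * P) * fact n" by (rule mult_le_mono1)
  also have "\<dots> = fact N" using fN by (simp add: algebra_simps)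
  finally have key: "Suc d * fact n \<le> fact N" .
  have symc: "\<And>x y. confl t m x y \<Longrightarrow> confl t m y x"
  proof -
    fix x y assume "confl t m x y"
    then obtain pe where "stuck_at_error t m x pe" "stuck_at_error t m y pe" unfolding confl_def by blast
    then show "confl t m y x" unfolding confl_def by blast
  qed
  have bd: "\<And>x. x \<in> perms N \<Longrightarrow> card {y \<in> perms N. confl t m x y} \<le> d"
    unfolding d_def by (rule nbr_bound)
  have ex: "\<exists>C\<subseteq>perms N. (\<forall>x\<in>C. \<forall>y\<in>C. x \<noteq> y \<longrightarrow> \<not> confl t m x y) \<and>
    card (perms N) \<le> Suc d * card C"
    by (rule greedy[of "perms N" "confl t m" d, OF perms_finite symc bd])
  then obtain C where C: "C \<subseteq> perms N" "\<forall>x\<in>C. \<forall>y\<in>C. x \<noteq> y \<longrightarrow> \<not> confl t m x y"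
    "card (perms N) \<le> Suc d * card C"
    by blast
  have "fact n \<le> card C"
  proof (rule ccontr)
    assume "\<not> fact n \<le> card C"
    then have "Suc d * card C < Suc d * fact n" by (intro mult_less_mono2) auto
    then show False using C(3) key perms_card[of N] by linarith
  qed
  moreover have "finite C" using C(1) perms_finite finite_subset by blast
  ultimately obtain f where f: "f ` perms n \<subseteq> C" "inj_on f (perms n)"
    using card_le_inj[OF perms_finite \<open>finite C\<close>, of n] perms_card[of n] by auto
  define D where "D = (\<lambda>pe. SOME \<sigma>. \<sigma> \<in> perms n \<and> stuck_at_error t m (f \<sigma>) pe)"
  have "\<forall>\<sigma>\<in>perms n. f \<sigma> \<in> perms (n + t' + 1)" using f C(1) unfolding N_def by blast
  moreover have "\<forall>\<sigma>\<in>perms n. \<forall>pe. stuck_at_error t m (f \<sigma>) pe \<longrightarrow> D pe = \<sigma>"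
  proof (intro ballI allI impI)
    fix \<sigma> pe assume s: "\<sigma> \<in> perms n" and e: "stuck_at_error t m (f \<sigma>) pe"
    define \<tau> where "\<tau> = D pe"
    have "\<tau> \<in> perms n \<and> stuck_at_error t m (f \<tau>) pe"
      unfolding \<tau>_def D_def using s e by (intro someI[of "\<lambda>x. x \<in> perms n \<and> stuck_at_error t m (f x) pe" \<sigma>] conjI)
    then have t: "\<tau> \<in> perms n" and e2: "stuck_at_error t m (f \<tau>) pe" by auto
    have "confl t m (f \<sigma>) (f \<tau>)" unfolding confl_def using e e2 by blast
    moreover have "f \<sigma> \<in> C" "f \<tau> \<in> C" using f(1) s t by auto
    ultimately have "f \<sigma> = f \<tau>" using C(2) by blast
    then have "\<sigma> = \<tau>" using inj_onD[OF f(2) _ s t] by blast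
    then show "D pe = \<sigma>" unfolding \<tau>_def by simp
  qed
  ultimately show ?thesis by (intro exI[of _ f] exI[of _ D] conjI)
qed

end
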